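(* For every real $\varepsilon>0$ there exist a positive integer $j$ and a vector $\mathbf{y}\in\mathbb{R}^j$ with $\mathbf{y}\ge \mathbf{0}$ (componentwise) such that $M_{j,\varepsilon}^T\mathbf{y}\ge \mathbf{0}$ and $\mathbf{b}'^T_{j,\varepsilon}\mathbf{y}<0$.
   Context: For a positive integer $j$ and real $\varepsilon$, $M_{j,\varepsilon}$ is the $j\times j$ lower triangular matrix with entries $m_{a,b}=1$ if $a=b$, $m_{a,b}=-(3-\varepsilon)$ if $a=b+1$, $m_{a,b}=1$ if $a\ge b+2$, and $m_{a,b}=0$ if $a<b$. The vector $\mathbf{b}'_{j,\varepsilon}\in\mathbb{R}^j$ has coordinates $b'_1=7-2\varepsilon$ and $b'_i=12-i-3\varepsilon$ for $2\le i\le j$ (equivalently, $\mathbf{b}'_{j,\varepsilon}=(8-2\varepsilon)\mathbf{1}-M_{j,\varepsilon}\mathbf{1}$, where $\mathbf{1}$ is the all-ones vector). *)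

theory Defs
  imports Complex_Main
begin

text \<open>Entries of the j x j lower triangular matrix M_{j,eps}, 1-based indices a, b in {1..j}
  (the entries do not depend on j).\<close>
definition M_entry :: "real \<Rightarrow> nat \<Rightarrow> nat \<Rightarrow> real" where
  "M_entry eps a b =
     (if a = b then 1
      else if a = b + 1 then - (3 - eps)
      else if a \<ge> b + 2 then 1
      else 0)"

definition b_prime :: "real \<Rightarrow> nat \<Rightarrow> real" where
  "b_prime eps i = (if i = 1 then 7 - 2 * eps else 12 - real i - 3 * eps)"

end

theory Submission
  imports Defs
begin

lemma tail_sum:
  fixes y u :: "nat \<Rightarrow> real"
  assumes y: "\<And>i. i \<le> j \<Longrightarrow> y i = u (j + 1 - i) - u (j - i)" and u0: "u 0 = 0"
  shows "b \<le> j + 1 \<Longrightarrow> sum y {b..j} = u (j + 1 - b)"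
proof (induction "j + 1 - b" arbitrary: b)
  case 0
  then have "b = j + 1" by simp
  then show ?case using u0 by simp
next
  case (Suc n)
  then have bj: "b \<le> j" by simp
  have "sum y {b..j} = y b + sum y {Suc b..j}" using bj by (rule sum.atLeast_Suc_atMost)
  also have "sum y {Suc b..j} = u (j + 1 - Suc b)" using Suc by simp
  also have "y b = u (j + 1 - b) - u (j - b)" using y bj by simp
  also have "j + 1 - Suc b = j - b" by simp
  finally show ?case by simp
qed

theorem mainTheorem6:
  fixes eps :: real
  assumes "eps > 0"
  shows "\<exists>(j::nat) (y::nat \<Rightarrow> real). j \<ge> 1 \<and>
           (\<forall>i\<in>{1..j}. y i \<ge> 0) \<and>
           (\<forall>b\<in>{1..j}. (\<Sum>a=1..j. M_entry eps a b * y a) \<ge> 0) \<and>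
           (\<Sum>i=1..j. b_prime eps i * y i) < 0"
proof -
  define N :: nat where "N = nat \<lceil>8 / eps\<rceil> + 4"
  define j where "j = N + 12"
  define u :: "nat \<Rightarrow> real" where
    "u k = (if k \<le> N then 2 ^ k * real k * (real N + 1 - real k) else 2 ^ N * real N)" for k
  define y where "y i = u (j + 1 - i) - u (j - i)" for i
  have N4: "real N \<ge> 4" unfolding N_def by simp
  have N8: "eps * real N \<ge> 8"
  proof -
    have "real N \<ge> 8 / eps" unfolding N_def by linarith
    then show ?thesis using assms by (simp add: field_simps)
  qed
  have u0: "u 0 = 0" unfolding u_def by simp
  have uN: "u k = 2 ^ N * real N" if "k \<ge> N" for k using that unfolding u_def by auto
  have umono: "u k \<le> u (Suc k)" for k
  proof (cases "Suc k \<le> N")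
    case True
    have kk: "real k \<le> real N - 1" using True by linarith
    have "real k * (real N - real k - 3) \<ge> real k * (-2)"
      by (rule mult_left_mono) (use kk in auto)
    then have "real k * (real N + 1 - real k) \<le> 2 * ((real k + 1) * (real N - real k))"
      using kk by (simp add: algebra_simps)
    then have "2 ^ k * (real k * (real N + 1 - real k)) \<le> 2 ^ k * (2 * ((real k + 1) * (real N - real k)))"
      by (rule mult_left_mono) simp
    then show ?thesis using True unfolding u_def by (simp add: algebra_simps)
  next
    case False
    then show ?thesis using uN[of k] uN[of "Suc k"] by simp
  qed
  have umono2: "u a \<le> u b" if "a \<le> b" for a b
    using that by (induction rule: dec_induct) (auto intro: order_trans umono)
  have C1: "u (k + 2) - (4 - eps) * u (k + 1) + (4 - eps) * u k \<ge> 0" for k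
  proof -
    consider "k + 2 \<le> N" | "k + 1 = N" | "k \<ge> N" by linarith
    then show ?thesis
    proof cases
      case 1
      have kk: "real k \<le> real N - 2" using 1 by linarith
      have "real k * (real N - real k - 3) \<ge> real k * (-1)"
        by (rule mult_left_mono) (use kk in auto)
      then have h: "real N * real k - real k * real k + 2 * real N - 3 * real k \<ge> real N"
        using kk by (simp add: algebra_simps)
      have "eps * (real N * real k - real k * real k + 2 * real N - 3 * real k) \<ge> eps * real N"
        using h assms by (simp add: mult_left_mono)
      then have e: "eps * (real N * real k - real k * real k + 2 * real N - 3 * real k) - 8 \<ge> 0"
        using N8 by linarith
      have eq: "u (k + 2) - (4 - eps) * u (k + 1) + (4 - eps) * u k =
          2 ^ k * (eps * (real N * real k - real k * real k + 2 * real N - 3 * real k) - 8)"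
        using 1 unfolding u_def by (simp add: algebra_simps)
      show ?thesis unfolding eq using e by simp
    next
      case 2
      have eq: "u (k + 2) - (4 - eps) * u (k + 1) + (4 - eps) * u k =
          2 ^ (k+1) * (real N - (4 - eps))"
        using 2 unfolding u_def by (auto simp add: algebra_simps)
      show ?thesis unfolding eq using N4 assms by simp
    next
      case 3
      then show ?thesis using uN[of k] uN[of "k+1"] uN[of "k+2"] by simp
    qed
  qed
  have ynn: "y i \<ge> 0" if "i \<le> j" for i
    using umono[of "j - i"] that unfolding y_def by (simp add: Suc_diff_le)
  have ytail: "\<And>b. b \<le> j + 1 \<Longrightarrow> sum y {b..j} = u (j + 1 - b)"
    by (rule tail_sum[of j y u]) (auto simp: y_def u0)
  have col: "(\<Sum>a=1..j. M_entry eps a b * y a) \<ge> 0" if b: "b \<in> {1..j}" for b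
  proof -
    have "{1..j} = {1..<b} \<union> {b..j}" using b by auto
    then have "(\<Sum>a=1..j. M_entry eps a b * y a) =
        (\<Sum>a\<in>{1..<b}. M_entry eps a b * y a) + (\<Sum>a=b..j. M_entry eps a b * y a)"
      by (simp add: sum.union_disjoint ivl_disj_int)
    also have "(\<Sum>a\<in>{1..<b}. M_entry eps a b * y a) = 0"
      by (rule sum.neutral) (auto simp: M_entry_def)
    also have "(\<Sum>a=b..j. M_entry eps a b * y a) = y b + (\<Sum>a=Suc b..j. M_entry eps a b * y a)"
      using b by (subst sum.atLeast_Suc_atMost) (auto simp: M_entry_def)
    finally have s: "(\<Sum>a=1..j. M_entry eps a b * y a) = y b + (\<Sum>a=Suc b..j. M_entry eps a b * y a)"
      by simp
    show ?thesis
    proof (cases "b = j")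
      case True
      then show ?thesis unfolding s using ynn[of j] by simp
    next
      case False
      then have bj: "Suc b \<le> j" using b by auto
      have "(\<Sum>a=Suc b..j. M_entry eps a b * y a) =
          - (3 - eps) * y (Suc b) + (\<Sum>a=Suc (Suc b)..j. M_entry eps a b * y a)"
        using bj by (subst sum.atLeast_Suc_atMost) (auto simp: M_entry_def)
      also have "(\<Sum>a=Suc (Suc b)..j. M_entry eps a b * y a) = sum y {Suc (Suc b)..j}"
        by (rule sum.cong) (auto simp: M_entry_def)
      also have "\<dots> = u (j - 1 - b)" using ytail[of "Suc (Suc b)"] bj by simp
      finally have s2: "(\<Sum>a=Suc b..j. M_entry eps a b * y a) = - (3 - eps) * y (Suc b) + u (j - 1 - b)" .
      define k where "k = j - 1 - b"
      have k1: "j + 1 - b = k + 2" "j - b = k + 1" "j + 1 - Suc b = k + 1" "j - Suc b = k"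
        using bj unfolding k_def by auto
      have "(\<Sum>a=1..j. M_entry eps a b * y a) = u (k + 2) - (4 - eps) * u (k + 1) + (4 - eps) * u k"
      proof -
        have e1: "y b = u (k + 2) - u (k + 1)" and e2: "y (Suc b) = u (k + 1) - u k"
          unfolding y_def using k1 by simp_all
        have e3: "u (j - 1 - b) = u k" unfolding k_def ..
        show ?thesis unfolding s s2 e1 e2 e3 by (simp only: algebra_simps) (simp add: algebra_simps)
      qed
      then show ?thesis using C1[of k] by simp
    qed
  qed
  have terms: "b_prime eps i * y i \<le> 0" if "i \<in> {1..j}" for i
  proof (cases "i \<le> 12")
    case True
    then have "y i = 0" unfolding y_def using uN[of "j - i"] uN[of "j + 1 - i"] by (simp add: j_def)
    then show ?thesis by simp
  next
    case False
    then have "b_prime eps i < 0" using assms unfolding b_prime_def by auto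
    then show ?thesis using ynn[of i] that by (simp add: mult_nonpos_nonneg)
  qed
  have lastt: "b_prime eps j * y j < 0"
  proof -
    have "b_prime eps j < 0" using assms unfolding b_prime_def j_def by auto
    moreover have "y j > 0" unfolding y_def u_def using N4 by simp
    ultimately show ?thesis by (simp add: mult_neg_pos)
  qed
  have js: "j = Suc (N + 11)" by (simp add: j_def)
  have "(\<Sum>i=1..j. b_prime eps i * y i) = (\<Sum>i=1..N+11. b_prime eps i * y i) + b_prime eps j * y j"
    unfolding js sum.cl_ivl_Suc by simp
  also have "(\<Sum>i=1..N+11. b_prime eps i * y i) \<le> 0"
    by (rule sum_nonpos) (use terms in \<open>auto simp: j_def\<close>)
  finally have obj: "(\<Sum>i=1..j. b_prime eps i * y i) < 0" using lastt by linarith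
  show ?thesis
    by (rule exI[of _ j], rule exI[of _ y]) (use obj col ynn in \<open>auto simp: j_def\<close>)
qed

end
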